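(* Let $k\ge 2$ be an integer and $\sigma^2>0$. Let $X_1,\dots,X_k$ be real-valued random variables with finite second moments (the values of one fixed weight coordinate in the $k$ model instances), and let $$S^2=\frac{1}{k-1}\sum_{u=1}^k\Bigl(X_u-\tfrac1k\textstyle\sum_{v=1}^k X_v\Bigr)^2$$ be their unbiased sample variance. Assume $\mathbb E[S^2]=\frac{k}{2}\sigma^2$. Perform one "draw and discard" update: choose an index $j$ uniformly at random from $\{1,\dots,k\}$, choose an index $l$ uniformly at random from $\{1,\dots,k\}$ (with $j$, $l$ independent of each other and of everything else), draw a noise variable $r$ independent of $(X_1,\dots,X_k,j,l)$ with $\mathbb E[r]=0$ and $\mathrm{Var}(r)=\sigma^2$, and define new values $X'_l=X_j+r$ and $X'_u=X_u$ for $u\neq l$. Then the unbiased sample variance $S'^2$ of $X'_1,\dots,X'_k$ satisfies $\mathbb E[S'^2]=\frac{k}{2}\sigma^2$. Consequently, applying the update repeatedly (with fresh independent $j,l,r$ each time), the expected intra-model sample variance stays equal to $\frac{k}{2}\sigma^2$ after any number of updates; the same holds coordinatewise for vector-valued weights $B=(B_1,\dots,B_p)$ with per-coordinate noise variances $\sigma_i^2$.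
   Context: This models the server side of "Draw and Discard" machine learning: the server keeps $k$ instances of a model; at each step a uniformly random instance is sent to a client, which returns it with independent zero-mean noise added (variance $\sigma^2$ per coordinate), and the returned model overwrites a uniformly random one of the $k$ instances (possibly the one that was drawn). *)

theory Defs
  imports "HOL-Probability.Probability"
begin

definition sample_var :: "('k::finite \<Rightarrow> real) \<Rightarrow> real" where
  "sample_var x = (1 / (real CARD('k) - 1)) *
     (\<Sum>u\<in>UNIV. (x u - (1 / real CARD('k)) * (\<Sum>v\<in>UNIV. x v))\<^sup>2)"

definition dd_update :: "('k \<Rightarrow> real) \<Rightarrow> 'k \<Rightarrow> 'k \<Rightarrow> real \<Rightarrow> ('k \<Rightarrow> real)" where
  "dd_update x j l r = (\<lambda>u. if u = l then x j + r else x u)"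

text \<open>The events generated by a random variable Y with values in N (as in the
  library definition of indep_vars, which is restricted to a single value type; we use it
  to express mutual independence of variables of different types).\<close>
definition gen_events :: "'a measure \<Rightarrow> 'b measure \<Rightarrow> ('a \<Rightarrow> 'b) \<Rightarrow> 'a set set" where
  "gen_events M N Y = {Y -` A \<inter> space M | A. A \<in> sets N}"

end

theory Submission
  imports Defs
begin


definition Q :: "('k::finite \<Rightarrow> real) \<Rightarrow> real" where "Q x = (\<Sum>u\<in>UNIV. (x u)\<^sup>2)"
definition S :: "('k::finite \<Rightarrow> real) \<Rightarrow> real" where "S x = (\<Sum>u\<in>UNIV. x u)"

lemma sv_alt: "sample_var (x :: 'k::finite \<Rightarrow> real) = (Q x - (S x)\<^sup>2 / real CARD('k)) / (real CARD('k) - 1)"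
proof -
  let ?n = "real CARD('k)"
  have n: "?n > 0" by simp
  have "(\<Sum>u\<in>UNIV. (x u - (1 / ?n) * S x)\<^sup>2) = (\<Sum>u\<in>UNIV. (x u)\<^sup>2 - 2 * (S x / ?n) * x u + (S x / ?n)\<^sup>2)"
    by (intro sum.cong) (auto simp: power2_eq_square algebra_simps)
  also have "\<dots> = Q x - 2 * (S x / ?n) * S x + ?n * (S x / ?n)\<^sup>2"
    by (simp add: sum.distrib sum_subtractf sum_distrib_left[symmetric] sum_divide_distrib[symmetric] Q_def S_def)
  also have "\<dots> = Q x - (S x)\<^sup>2 / ?n" using n by (simp add: power2_eq_square field_simps)
  finally show ?thesis unfolding sample_var_def S_def by (simp add: divide_inverse mult.commute)
qed

lemma S_dd: "S (dd_update x a b t) = S x - x b + (x a + t)"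
proof -
  have "S (dd_update x a b t) = (\<Sum>u\<in>UNIV. x u + (if u = b then x a + t - x b else 0))"
    unfolding S_def dd_update_def by (intro sum.cong) auto
  also have "\<dots> = S x + (x a + t - x b)" by (simp add: sum.distrib S_def)
  finally show ?thesis by simp
qed

lemma Q_dd: "Q (dd_update x a b t) = Q x - (x b)\<^sup>2 + (x a + t)\<^sup>2"
proof -
  have "Q (dd_update x a b t) = (\<Sum>u\<in>UNIV. (x u)\<^sup>2 + (if u = b then (x a + t)\<^sup>2 - (x b)\<^sup>2 else 0))"
    unfolding Q_def dd_update_def by (intro sum.cong) auto
  also have "\<dots> = Q x + ((x a + t)\<^sup>2 - (x b)\<^sup>2)" by (simp add: sum.distrib Q_def)
  finally show ?thesis by simp
qed

definition G0 :: "('k::finite \<Rightarrow> real) \<Rightarrow> 'k \<Rightarrow> 'k \<Rightarrow> real" where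
  "G0 x a b = (Q x - (x b)\<^sup>2 + (x a)\<^sup>2 - (S x - x b + x a)\<^sup>2 / real CARD('k)) / (real CARD('k) - 1)"
definition G1 :: "('k::finite \<Rightarrow> real) \<Rightarrow> 'k \<Rightarrow> 'k \<Rightarrow> real" where
  "G1 x a b = (2 * x a - 2 * (S x - x b + x a) / real CARD('k)) / (real CARD('k) - 1)"

lemma decomp:
  assumes k: "CARD('k::finite) \<ge> 2"
  shows "sample_var (dd_update (x :: 'k \<Rightarrow> real) a b t) = G0 x a b + G1 x a b * t + t\<^sup>2 / real CARD('k)"
proof -
  have n: "real CARD('k) - 1 > 0" "real CARD('k) > 0" using k by auto
  define d where "d = S x - x b + x a"
  define nn where "nn = real CARD('k)"
  have nn: "nn - 1 > 0" "nn > 0" using n by (auto simp: nn_def)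
  have e1: "S x - x b + (x a + t) = d + t" by (simp add: d_def)
  have "sample_var (dd_update x a b t) = (Q x - (x b)\<^sup>2 + (x a + t)\<^sup>2 - (d + t)\<^sup>2 / nn) / (nn - 1)"
    unfolding sv_alt S_dd Q_dd e1 nn_def ..
  also have "\<dots> = (Q x - (x b)\<^sup>2 + (x a)\<^sup>2 - d\<^sup>2 / nn) / (nn - 1) + (2 * x a - 2 * d / nn) / (nn - 1) * t
       + t\<^sup>2 * ((nn - 1) / nn) / (nn - 1)"
  proof -
    have num: "Q x - (x b)\<^sup>2 + (x a + t)\<^sup>2 - (d + t)\<^sup>2 / nn = (Q x - (x b)\<^sup>2 + (x a)\<^sup>2 - d\<^sup>2 / nn) + (2 * x a - 2 * d / nn) * t + t\<^sup>2 * ((nn - 1) / nn)"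
      using nn by (simp add: field_simps power2_eq_square)
    show ?thesis unfolding num by (simp add: add_divide_distrib)
  qed
  also have "\<dots> = G0 x a b + G1 x a b * t + t\<^sup>2 / real CARD('k)"
    using nn by (simp add: G0_def G1_def d_def nn_def)
  finally show ?thesis .
qed

lemma sum_sq_shift: "(\<Sum>b\<in>UNIV. (c - (x::'k::finite \<Rightarrow> real) b)\<^sup>2) = real CARD('k) * c\<^sup>2 - 2 * c * S x + Q x"
proof -
  have "(\<Sum>b\<in>UNIV. (c - x b)\<^sup>2) = (\<Sum>b\<in>UNIV. c\<^sup>2 - 2 * c * x b + (x b)\<^sup>2)"
    by (intro sum.cong) (auto simp: power2_eq_square algebra_simps)
  also have "\<dots> = real CARD('k) * c\<^sup>2 - 2 * c * S x + Q x"
    by (simp add: sum.distrib sum_subtractf sum_distrib_left[symmetric] Q_def S_def)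
  finally show ?thesis .
qed

lemma sumG0:
  assumes k: "CARD('k::finite) \<ge> 2"
  shows "(\<Sum>a\<in>UNIV. \<Sum>b\<in>UNIV. G0 (x :: 'k \<Rightarrow> real) a b) = ((real CARD('k))\<^sup>2 - 2) * sample_var x"
proof -
  let ?n = "real CARD('k)"
  have n: "?n - 1 > 0" "?n > 0" using k by auto
  have inner: "(\<Sum>b\<in>UNIV. (S x + x a - x b)\<^sup>2) = ?n * (S x + x a)\<^sup>2 - 2 * (S x + x a) * S x + Q x" for a
    using sum_sq_shift[of "S x + x a" x] by simp
  have outer: "(\<Sum>a\<in>UNIV. ?n * (S x + x a)\<^sup>2 - 2 * (S x + x a) * S x + Q x)
      = ?n * (?n * (S x)\<^sup>2 + 2 * S x * S x + Q x) - 2 * (?n * S x * S x + S x * S x) + ?n * Q x"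
  proof -
    have "(\<Sum>a\<in>UNIV. ?n * (S x + x a)\<^sup>2 - 2 * (S x + x a) * S x + Q x)
      = (\<Sum>a\<in>UNIV. ?n * (S x)\<^sup>2 + 2 * ?n * S x * x a + ?n * (x a)\<^sup>2 - 2 * (S x) * S x - 2 * S x * x a + Q x)"
      by (intro sum.cong) (auto simp: power2_eq_square algebra_simps)
    also have "\<dots> = ?n * (?n * (S x)\<^sup>2 + 2 * S x * S x + Q x) - 2 * (?n * S x * S x + S x * S x) + ?n * Q x"
      by (simp add: sum.distrib sum_subtractf sum_distrib_left[symmetric] Q_def S_def algebra_simps sum_distrib_right[symmetric])
    finally show ?thesis .
  qed
  have "(\<Sum>a\<in>UNIV. \<Sum>b\<in>UNIV. G0 x a b) =
     (\<Sum>a\<in>UNIV. \<Sum>b\<in>UNIV. (Q x - (x b)\<^sup>2 + (x a)\<^sup>2 - (S x + x a - x b)\<^sup>2 / ?n)) / (?n - 1)"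
    unfolding G0_def by (simp add: sum_divide_distrib algebra_simps)
  also have "(\<Sum>a\<in>UNIV. \<Sum>b\<in>UNIV. (Q x - (x b)\<^sup>2 + (x a)\<^sup>2 - (S x + x a - x b)\<^sup>2 / ?n))
     = (\<Sum>a\<in>UNIV. ?n * Q x - Q x + ?n * (x a)\<^sup>2 - (\<Sum>b\<in>UNIV. (S x + x a - x b)\<^sup>2) / ?n)"
    by (simp add: sum.distrib sum_subtractf sum_divide_distrib[symmetric] Q_def)
  also have "\<dots> = (\<Sum>a\<in>UNIV. ?n * Q x - Q x + ?n * (x a)\<^sup>2 - (?n * (S x + x a)\<^sup>2 - 2 * (S x + x a) * S x + Q x) / ?n)"
    by (simp add: inner)
  also have "\<dots> = ?n * ?n * Q x - ?n * Q x + ?n * Q x - (\<Sum>a\<in>UNIV. ?n * (S x + x a)\<^sup>2 - 2 * (S x + x a) * S x + Q x) / ?n"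
    by (simp add: sum.distrib sum_subtractf sum_divide_distrib[symmetric] sum_distrib_left[symmetric] Q_def) (simp add: algebra_simps)
  also have "\<dots> = (?n\<^sup>2 - 2) * (Q x - (S x)\<^sup>2 / ?n)"
    unfolding outer using n by (simp add: field_simps power2_eq_square)
  finally show ?thesis unfolding sv_alt by simp
qed


locale dd = prob_space M for M :: "'a measure" +
  fixes X :: "'k::finite \<Rightarrow> 'a \<Rightarrow> real" and j l :: "'a \<Rightarrow> 'k" and r :: "'a \<Rightarrow> real"
  assumes X_meas[measurable]: "\<And>u. X u \<in> borel_measurable M"
    and X_sq: "\<And>u. integrable M (\<lambda>\<omega>. (X u \<omega>)\<^sup>2)"
    and j_meas[measurable]: "j \<in> measurable M (count_space UNIV)"
    and l_meas[measurable]: "l \<in> measurable M (count_space UNIV)"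
    and j_unif: "\<And>i. measure M {\<omega>\<in>space M. j \<omega> = i} = 1 / real CARD('k)"
    and l_unif: "\<And>i. measure M {\<omega>\<in>space M. l \<omega> = i} = 1 / real CARD('k)"
    and r_meas[measurable]: "r \<in> borel_measurable M"
    and r_sq: "integrable M (\<lambda>\<omega>. (r \<omega>)\<^sup>2)"
    and indep: "indep_sets (\<lambda>i.
        [gen_events M (Pi\<^sub>M UNIV (\<lambda>_. borel)) (\<lambda>\<omega>. (\<lambda>u. X u \<omega>)),
         gen_events M (count_space UNIV) j,
         gen_events M (count_space UNIV) l,
         gen_events M borel r] ! i) {..<4}"
begin

lemma Xv_meas[measurable]: "(\<lambda>\<omega>. (\<lambda>u. X u \<omega>)) \<in> measurable M (Pi\<^sub>M UNIV (\<lambda>_. borel))"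
  by (rule measurable_PiM_single') auto

lemma ind_int: "integrable M (\<lambda>\<omega>. indicator {a} (j \<omega>) :: real)"
proof -
  have "integrable M (indicator {\<omega>\<in>space M. j \<omega> = a} :: _ \<Rightarrow> real)"
    by (intro integrable_real_indicator) (auto simp: emeasure_finite less_top[symmetric])
  then show ?thesis by (subst Bochner_Integration.integrable_cong[OF refl]) (auto simp: indicator_def split: if_splits)
qed

lemma ind_int': "integrable M (\<lambda>\<omega>. indicator {a} (l \<omega>) :: real)"
proof -
  have "integrable M (indicator {\<omega>\<in>space M. l \<omega> = a} :: _ \<Rightarrow> real)"
    by (intro integrable_real_indicator) (auto simp: emeasure_finite less_top[symmetric])
  then show ?thesis by (subst Bochner_Integration.integrable_cong[OF refl]) (auto simp: indicator_def split: if_splits)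
qed

lemma ind_E: "integral\<^sup>L M (\<lambda>\<omega>. indicator {a} (j \<omega>) :: real) = 1 / real CARD('k)"
proof -
  have "integral\<^sup>L M (\<lambda>\<omega>. indicator {a} (j \<omega>) :: real) = integral\<^sup>L M (indicator {\<omega>\<in>space M. j \<omega> = a})"
    by (rule Bochner_Integration.integral_cong[OF refl]) (auto simp: indicator_def)
  also have "\<dots> = measure M {\<omega>\<in>space M. j \<omega> = a}" by simp
  finally show ?thesis using j_unif by simp
qed

lemma ind_E': "integral\<^sup>L M (\<lambda>\<omega>. indicator {a} (l \<omega>) :: real) = 1 / real CARD('k)"
proof -
  have "integral\<^sup>L M (\<lambda>\<omega>. indicator {a} (l \<omega>) :: real) = integral\<^sup>L M (indicator {\<omega>\<in>space M. l \<omega> = a})"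
    by (rule Bochner_Integration.integral_cong[OF refl]) (auto simp: indicator_def)
  also have "\<dots> = measure M {\<omega>\<in>space M. l \<omega> = a}" by simp
  finally show ?thesis using l_unif by simp
qed

lemma factor:
  fixes g0 :: "('k \<Rightarrow> real) \<Rightarrow> real" and g3 :: "real \<Rightarrow> real"
  assumes g0[measurable]: "g0 \<in> borel_measurable (Pi\<^sub>M UNIV (\<lambda>_. borel))"
    and i0: "integrable M (\<lambda>\<omega>. g0 (\<lambda>u. X u \<omega>))"
    and g3[measurable]: "g3 \<in> borel_measurable borel"
    and i3: "integrable M (\<lambda>\<omega>. g3 (r \<omega>))"
  shows "integrable M (\<lambda>\<omega>. indicator {a} (j \<omega>) * indicator {b} (l \<omega>) * g0 (\<lambda>u. X u \<omega>) * g3 (r \<omega>))"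
    and "integral\<^sup>L M (\<lambda>\<omega>. indicator {a} (j \<omega>) * indicator {b} (l \<omega>) * g0 (\<lambda>u. X u \<omega>) * g3 (r \<omega>))
       = 1 / real CARD('k) * (1 / real CARD('k)) * integral\<^sup>L M (\<lambda>\<omega>. g0 (\<lambda>u. X u \<omega>)) * integral\<^sup>L M (\<lambda>\<omega>. g3 (r \<omega>))"
proof -
  define Y where "Y = (\<lambda>i::nat. [\<lambda>\<omega>. g0 (\<lambda>u. X u \<omega>), \<lambda>\<omega>. indicator {a} (j \<omega>) :: real,
      \<lambda>\<omega>. indicator {b} (l \<omega>), \<lambda>\<omega>. g3 (r \<omega>)] ! i)"
  have i4: "i < 4 \<Longrightarrow> i = 0 \<or> i = 1 \<or> i = 2 \<or> i = 3" for i :: nat by auto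
  have ind: "indep_vars (\<lambda>_. borel) Y {..<4}"
    unfolding indep_vars_def2
  proof
    show "\<forall>i\<in>{..<4}. random_variable borel (Y i)"
    proof
      fix i :: nat assume "i \<in> {..<4}"
      then have "i = 0 \<or> i = 1 \<or> i = 2 \<or> i = 3" using i4 by auto
      then show "random_variable borel (Y i)" by (elim disjE) (simp_all add: Y_def)
    qed
    show "indep_sets (\<lambda>i. {Y i -` A \<inter> space M |A. A \<in> sets borel}) {..<4}"
    proof (rule indep_sets_mono_sets[OF indep])
      fix i :: nat assume "i \<in> {..<4}"
      then have "i = 0 \<or> i = 1 \<or> i = 2 \<or> i = 3" using i4 by auto
      then show "{Y i -` A \<inter> space M |A. A \<in> sets borel} \<subseteq>
        [gen_events M (Pi\<^sub>M UNIV (\<lambda>_. borel)) (\<lambda>\<omega>. (\<lambda>u. X u \<omega>)),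
         gen_events M (count_space UNIV) j,
         gen_events M (count_space UNIV) l,
         gen_events M borel r] ! i"
      proof (elim disjE)
        assume [simp]: "i = 0"
        show ?thesis
        proof (clarsimp simp: gen_events_def Y_def)
          fix A :: "real set" assume A: "A \<in> sets borel"
          show "\<exists>B. (\<lambda>\<omega>. g0 (\<lambda>u. X u \<omega>)) -` A \<inter> space M = (\<lambda>\<omega> u. X u \<omega>) -` B \<inter> space M \<and> B \<in> sets (Pi\<^sub>M UNIV (\<lambda>_. borel))"
            using A measurable_space[OF Xv_meas]
            by (intro exI[of _ "g0 -` A \<inter> space (Pi\<^sub>M UNIV (\<lambda>_. borel))"]) (auto intro: measurable_sets[OF g0])
        qed
      next
        assume [simp]: "i = 1"
        show ?thesis
          by (clarsimp simp: gen_events_def Y_def, rule exI[of _ "(\<lambda>x. indicator {a} x :: real) -` _"]) auto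
      next
        assume [simp]: "i = 2"
        show ?thesis
          by (clarsimp simp: gen_events_def Y_def, rule exI[of _ "(\<lambda>x. indicator {b} x :: real) -` _"]) auto
      next
        assume [simp]: "i = 3"
        show ?thesis
        proof (clarsimp simp: gen_events_def Y_def)
          fix A :: "real set" assume A: "A \<in> sets borel"
          show "\<exists>B. (\<lambda>\<omega>. g3 (r \<omega>)) -` A \<inter> space M = r -` B \<inter> space M \<and> B \<in> sets borel"
            using A measurable_sets[OF g3 A]
            by (intro exI[of _ "g3 -` A"]) auto
        qed
      qed
    qed
  qed
  have iY: "\<And>i. i \<in> {..<4} \<Longrightarrow> integrable M (Y i)"
  proof -
    fix i :: nat assume "i \<in> {..<4}"
    then have "i = 0 \<or> i = 1 \<or> i = 2 \<or> i = 3" using i4 by auto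
    then show "integrable M (Y i)" using i0 i3 ind_int ind_int' by (elim disjE) (simp_all add: Y_def)
  qed
  have prodY: "(\<Prod>i\<in>{..<4}. Y i \<omega>) = indicator {a} (j \<omega>) * indicator {b} (l \<omega>) * g0 (\<lambda>u. X u \<omega>) * g3 (r \<omega>)" for \<omega>
    by (simp add: eval_nat_numeral lessThan_Suc Y_def mult_ac)
  have prodE: "(\<Prod>i\<in>{..<4}. integral\<^sup>L M (Y i)) = 1 / real CARD('k) * (1 / real CARD('k)) * integral\<^sup>L M (\<lambda>\<omega>. g0 (\<lambda>u. X u \<omega>)) * integral\<^sup>L M (\<lambda>\<omega>. g3 (r \<omega>))"
    by (simp add: eval_nat_numeral lessThan_Suc Y_def ind_E ind_E' mult_ac)
  show "integrable M (\<lambda>\<omega>. indicator {a} (j \<omega>) * indicator {b} (l \<omega>) * g0 (\<lambda>u. X u \<omega>) * g3 (r \<omega>))"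
    using indep_vars_integrable[OF _ ind iY] by (simp add: prodY)
  show "integral\<^sup>L M (\<lambda>\<omega>. indicator {a} (j \<omega>) * indicator {b} (l \<omega>) * g0 (\<lambda>u. X u \<omega>) * g3 (r \<omega>))
       = 1 / real CARD('k) * (1 / real CARD('k)) * integral\<^sup>L M (\<lambda>\<omega>. g0 (\<lambda>u. X u \<omega>)) * integral\<^sup>L M (\<lambda>\<omega>. g3 (r \<omega>))"
    using indep_vars_lebesgue_integral[OF _ ind iY] by (simp add: prodY prodE)
qed


definition sqi :: "('a \<Rightarrow> real) \<Rightarrow> bool" where
  "sqi f \<longleftrightarrow> f \<in> borel_measurable M \<and> integrable M (\<lambda>\<omega>. (f \<omega>)\<^sup>2)"

lemma sqi_X: "sqi (X u)" using X_sq by (simp add: sqi_def)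
lemma sqi_r: "sqi r" using r_sq by (simp add: sqi_def)

lemma sqi_add: assumes "sqi f" "sqi g" shows "sqi (\<lambda>\<omega>. f \<omega> + g \<omega>)"
proof -
  have m: "f \<in> borel_measurable M" "g \<in> borel_measurable M" using assms by (auto simp: sqi_def)
  have "integrable M (\<lambda>\<omega>. 2 * (f \<omega>)\<^sup>2 + 2 * (g \<omega>)\<^sup>2)" using assms by (auto simp: sqi_def)
  moreover have "(\<lambda>\<omega>. (f \<omega> + g \<omega>)\<^sup>2) \<in> borel_measurable M" using m by measurable
  moreover have "AE \<omega> in M. norm ((f \<omega> + g \<omega>)\<^sup>2) \<le> norm (2 * (f \<omega>)\<^sup>2 + 2 * (g \<omega>)\<^sup>2)"
  proof (intro AE_I2)
    fix \<omega> have h: "0 \<le> (f \<omega> - g \<omega>)\<^sup>2" by simp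
    have "(f \<omega> + g \<omega>)\<^sup>2 \<le> 2 * (f \<omega>)\<^sup>2 + 2 * (g \<omega>)\<^sup>2"
      using h by (simp add: power2_eq_square algebra_simps)
    moreover have "norm ((f \<omega> + g \<omega>)\<^sup>2) = (f \<omega> + g \<omega>)\<^sup>2" by simp
    moreover have "norm (2 * (f \<omega>)\<^sup>2 + 2 * (g \<omega>)\<^sup>2) = 2 * (f \<omega>)\<^sup>2 + 2 * (g \<omega>)\<^sup>2" by simp
    ultimately show "norm ((f \<omega> + g \<omega>)\<^sup>2) \<le> norm (2 * (f \<omega>)\<^sup>2 + 2 * (g \<omega>)\<^sup>2)" by simp
  qed
  ultimately have "integrable M (\<lambda>\<omega>. (f \<omega> + g \<omega>)\<^sup>2)" by (rule Bochner_Integration.integrable_bound)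
  then show ?thesis using m by (simp add: sqi_def)
qed

lemma sqi_cmult: assumes "sqi f" shows "sqi (\<lambda>\<omega>. c * f \<omega>)"
proof -
  have [measurable]: "f \<in> borel_measurable M" using assms by (simp add: sqi_def)
  have "(\<lambda>\<omega>. c * f \<omega>) \<in> borel_measurable M" by measurable
  then show ?thesis using assms by (simp add: sqi_def power_mult_distrib)
qed

lemma sqi_diff: assumes "sqi f" "sqi g" shows "sqi (\<lambda>\<omega>. f \<omega> - g \<omega>)"
  using sqi_add[OF assms(1) sqi_cmult[OF assms(2), of "-1"]] by simp

lemma sqi_sum: "sqi (\<lambda>\<omega>. \<Sum>u\<in>UNIV. X u \<omega>)"
proof -
  have "finite A \<Longrightarrow> sqi (\<lambda>\<omega>. \<Sum>u\<in>A. X u \<omega>)" for A :: "'k set"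
  proof (induction A rule: finite_induct)
    case empty then show ?case by (simp add: sqi_def)
  next
    case (insert x F) then show ?case using sqi_add[OF sqi_X[of x] insert(3)] by simp
  qed
  then show ?thesis by simp
qed

lemma sqi_int: "sqi f \<Longrightarrow> integrable M f"
  unfolding sqi_def by (auto intro: square_integrable_imp_integrable)

lemma sqi_sq: "sqi f \<Longrightarrow> integrable M (\<lambda>\<omega>. (f \<omega>)\<^sup>2)"
  unfolding sqi_def by auto

lemma G0_meas[measurable]: "(\<lambda>x. G0 x a b) \<in> borel_measurable (Pi\<^sub>M UNIV (\<lambda>_. borel))"
  unfolding G0_def Q_def S_def by measurable

lemma G1_meas[measurable]: "(\<lambda>x. G1 x a b) \<in> borel_measurable (Pi\<^sub>M UNIV (\<lambda>_. borel))"
  unfolding G1_def Q_def S_def by measurable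

lemma d_sqi: "sqi (\<lambda>\<omega>. (\<Sum>u\<in>UNIV. X u \<omega>) - X b \<omega> + X a \<omega>)"
  by (intro sqi_add sqi_diff sqi_sum sqi_X)

lemma G0_int: "integrable M (\<lambda>\<omega>. G0 (\<lambda>u. X u \<omega>) a b)"
  unfolding G0_def Q_def S_def
  using sqi_sq[OF d_sqi[of b a]] X_sq by (auto intro!: integrable_sum)

lemma G1_int: "integrable M (\<lambda>\<omega>. G1 (\<lambda>u. X u \<omega>) a b)"
  unfolding G1_def Q_def S_def
  apply (rule Bochner_Integration.integrable_divide_zero)
  apply (rule Bochner_Integration.integrable_diff)
   apply (rule Bochner_Integration.integrable_mult_right, rule sqi_int[OF sqi_X])
  apply (rule Bochner_Integration.integrable_divide_zero)
  apply (rule Bochner_Integration.integrable_mult_right, rule sqi_int[OF d_sqi])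
  done


lemma pick: "(\<Sum>a\<in>UNIV. \<Sum>b\<in>UNIV. indicator {a} (j \<omega>) * indicator {b} (l \<omega>) * h a b) = (h (j \<omega>) (l \<omega>) :: real)"
proof -
  have "(\<Sum>b\<in>UNIV. indicator {a} (j \<omega>) * indicator {b} (l \<omega>) * h a b) = indicator {a} (j \<omega>) * h a (l \<omega>)" for a
    by (simp add: indicator_def if_distrib sum.If_cases mult.assoc[symmetric])
  then show ?thesis by (simp add: indicator_def if_distrib sum.If_cases)
qed

lemma main:
  assumes k: "CARD('k) \<ge> 2" and r_mean: "integral\<^sup>L M r = 0"
    and r_var: "integral\<^sup>L M (\<lambda>\<omega>. (r \<omega> - integral\<^sup>L M r)\<^sup>2) = s2"
    and S2: "integral\<^sup>L M (\<lambda>\<omega>. sample_var (\<lambda>u. X u \<omega>)) = real CARD('k) / 2 * s2"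
  shows "integral\<^sup>L M (\<lambda>\<omega>. sample_var (dd_update (\<lambda>u. X u \<omega>) (j \<omega>) (l \<omega>) (r \<omega>)))
           = real CARD('k) / 2 * s2"
proof -
  let ?n = "real CARD('k)"
  have n: "?n \<ge> 2" using k by simp
  define T0 where "T0 a b \<omega> = indicator {a} (j \<omega>) * indicator {b} (l \<omega>) * G0 (\<lambda>u. X u \<omega>) a b * 1" for a b \<omega>
  define T1 where "T1 a b \<omega> = indicator {a} (j \<omega>) * indicator {b} (l \<omega>) * G1 (\<lambda>u. X u \<omega>) a b * r \<omega>" for a b \<omega>
  define T2 where "T2 a b \<omega> = indicator {a} (j \<omega>) * indicator {b} (l \<omega>) * 1 * ((r \<omega>)\<^sup>2 / ?n)" for a b \<omega>
  have r2: "integral\<^sup>L M (\<lambda>\<omega>. (r \<omega>)\<^sup>2) = s2" using r_var r_mean by simp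
  have F_eq: "sample_var (dd_update (\<lambda>u. X u \<omega>) (j \<omega>) (l \<omega>) (r \<omega>)) = (\<Sum>a\<in>UNIV. \<Sum>b\<in>UNIV. T0 a b \<omega> + T1 a b \<omega> + T2 a b \<omega>)" for \<omega>
  proof -
    have "sample_var (dd_update (\<lambda>u. X u \<omega>) (j \<omega>) (l \<omega>) (r \<omega>)) =
      (\<Sum>a\<in>UNIV. \<Sum>b\<in>UNIV. indicator {a} (j \<omega>) * indicator {b} (l \<omega>) *
         (G0 (\<lambda>u. X u \<omega>) a b + G1 (\<lambda>u. X u \<omega>) a b * r \<omega> + (r \<omega>)\<^sup>2 / ?n))"
      by (subst pick) (rule decomp[OF k])
    also have "\<dots> = (\<Sum>a\<in>UNIV. \<Sum>b\<in>UNIV. T0 a b \<omega> + T1 a b \<omega> + T2 a b \<omega>)"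
      unfolding T0_def T1_def T2_def by (intro sum.cong refl) (simp add: algebra_simps)
    finally show ?thesis .
  qed
  have c1: "(\<lambda>t::real. 1::real) \<in> borel_measurable borel" "(\<lambda>x::'k\<Rightarrow>real. 1::real) \<in> borel_measurable (Pi\<^sub>M UNIV (\<lambda>_. borel))"
    "(\<lambda>t::real. t) \<in> borel_measurable borel" "(\<lambda>t::real. t\<^sup>2 / ?n) \<in> borel_measurable borel" by measurable
  have ir: "integrable M r" by (rule sqi_int[OF sqi_r])
  have ir2: "integrable M (\<lambda>\<omega>. (r \<omega>)\<^sup>2 / ?n)" using r_sq by simp
  have i1: "integrable M (\<lambda>\<omega>. 1::real)" by simp
  have iT: "integrable M (T0 a b)" "integrable M (T1 a b)" "integrable M (T2 a b)" for a b
    unfolding T0_def T1_def T2_def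
    by (rule factor(1)[OF G0_meas G0_int c1(1)], simp, rule factor(1)[OF G1_meas G1_int c1(3) ir],
        rule factor(1)[OF c1(2) i1 c1(4) ir2])
  have ET: "integral\<^sup>L M (T0 a b) = 1 / ?n * (1 / ?n) * integral\<^sup>L M (\<lambda>\<omega>. G0 (\<lambda>u. X u \<omega>) a b)"
    "integral\<^sup>L M (T1 a b) = 0" "integral\<^sup>L M (T2 a b) = 1 / ?n * (1 / ?n) * (s2 / ?n)" for a b
  proof -
    show "integral\<^sup>L M (T0 a b) = 1 / ?n * (1 / ?n) * integral\<^sup>L M (\<lambda>\<omega>. G0 (\<lambda>u. X u \<omega>) a b)"
      unfolding T0_def using factor(2)[OF G0_meas G0_int c1(1), of a b a b] by (simp add: prob_space)
    show "integral\<^sup>L M (T1 a b) = 0"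
      unfolding T1_def using factor(2)[OF G1_meas G1_int c1(3) ir, of a b a b] r_mean by (simp add: prob_space)
    show "integral\<^sup>L M (T2 a b) = 1 / ?n * (1 / ?n) * (s2 / ?n)"
      unfolding T2_def using factor(2)[OF c1(2) i1 c1(4) ir2, of a b] r2 by (simp add: prob_space)
  qed
  have "integral\<^sup>L M (\<lambda>\<omega>. sample_var (dd_update (\<lambda>u. X u \<omega>) (j \<omega>) (l \<omega>) (r \<omega>)))
     = integral\<^sup>L M (\<lambda>\<omega>. \<Sum>a\<in>UNIV. \<Sum>b\<in>UNIV. T0 a b \<omega> + T1 a b \<omega> + T2 a b \<omega>)"
    by (simp add: F_eq)
  also have "\<dots> = (\<Sum>a\<in>UNIV. \<Sum>b\<in>UNIV. integral\<^sup>L M (T0 a b) + integral\<^sup>L M (T1 a b) + integral\<^sup>L M (T2 a b))"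
    using iT by (simp add: Bochner_Integration.integral_sum Bochner_Integration.integrable_sum)
  also have "\<dots> = (\<Sum>a\<in>UNIV. \<Sum>b\<in>UNIV. 1 / ?n * (1 / ?n) * integral\<^sup>L M (\<lambda>\<omega>. G0 (\<lambda>u. X u \<omega>) a b)) + ?n * ?n * (1 / ?n * (1 / ?n) * (s2 / ?n))"
    by (simp add: ET sum.distrib)
  also have "(\<Sum>a\<in>UNIV. \<Sum>b\<in>UNIV. 1 / ?n * (1 / ?n) * integral\<^sup>L M (\<lambda>\<omega>. G0 (\<lambda>u. X u \<omega>) a b))
      = 1 / ?n * (1 / ?n) * integral\<^sup>L M (\<lambda>\<omega>. \<Sum>a\<in>UNIV. \<Sum>b\<in>UNIV. G0 (\<lambda>u. X u \<omega>) a b)"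
    using G0_int by (simp add: Bochner_Integration.integral_sum Bochner_Integration.integrable_sum sum_distrib_left)
  also have "integral\<^sup>L M (\<lambda>\<omega>. \<Sum>a\<in>UNIV. \<Sum>b\<in>UNIV. G0 (\<lambda>u. X u \<omega>) a b) = (?n\<^sup>2 - 2) * (?n / 2 * s2)"
    by (simp add: sumG0[OF k] S2)
  finally show ?thesis using n by (simp add: field_simps power2_eq_square)
qed

end

theorem theorem1:
  fixes M :: "'a measure"
    and X :: "'k::finite \<Rightarrow> 'a \<Rightarrow> real"
    and j l :: "'a \<Rightarrow> 'k"
    and r :: "'a \<Rightarrow> real"
    and s2 :: real
  assumes M: "prob_space M"
    and k: "CARD('k) \<ge> 2"
    and s2: "s2 > 0"
    and X_meas: "\<And>u. X u \<in> borel_measurable M"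
    and X_sq: "\<And>u. integrable M (\<lambda>\<omega>. (X u \<omega>)\<^sup>2)"
    and S2: "integral\<^sup>L M (\<lambda>\<omega>. sample_var (\<lambda>u. X u \<omega>)) = real CARD('k) / 2 * s2"
    and j_meas: "j \<in> measurable M (count_space UNIV)"
    and l_meas: "l \<in> measurable M (count_space UNIV)"
    and j_unif: "\<And>i. measure M {\<omega>\<in>space M. j \<omega> = i} = 1 / real CARD('k)"
    and l_unif: "\<And>i. measure M {\<omega>\<in>space M. l \<omega> = i} = 1 / real CARD('k)"
    and r_meas: "r \<in> borel_measurable M"
    and r_sq: "integrable M (\<lambda>\<omega>. (r \<omega>)\<^sup>2)"
    and r_mean: "integral\<^sup>L M r = 0"
    and r_var: "integral\<^sup>L M (\<lambda>\<omega>. (r \<omega> - integral\<^sup>L M r)\<^sup>2) = s2"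
    and indep: "prob_space.indep_sets M (\<lambda>i.
        [gen_events M (Pi\<^sub>M UNIV (\<lambda>_. borel)) (\<lambda>\<omega>. (\<lambda>u. X u \<omega>)),
         gen_events M (count_space UNIV) j,
         gen_events M (count_space UNIV) l,
         gen_events M borel r] ! i) {..<4}"
  shows "integral\<^sup>L M (\<lambda>\<omega>. sample_var (dd_update (\<lambda>u. X u \<omega>) (j \<omega>) (l \<omega>) (r \<omega>)))
           = real CARD('k) / 2 * s2"
  proof -
  interpret prob_space M by (rule M)
  interpret D: dd M X j l r
    by unfold_locales (fact X_meas X_sq j_meas l_meas j_unif l_unif r_meas r_sq indep)+
  show ?thesis by (rule D.main[OF k r_mean r_var S2])
qed

end
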